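(* (i) For integers $k\geq 2$ and $n\geq 2k^2+3$, $\rho(N_{n,n}^{k-2,1})>\rho(M_{n,n}^{n-k,2})$. (ii) For integers $k\geq 2$ and $n\geq k+1$, $q(M_{n,n}^{n-k,2})>q(N_{n,n}^{k-2,1})$.
   Context: $\rho$ denotes the largest eigenvalue of the adjacency matrix and $q$ the largest eigenvalue of $D+A$ (diagonal degree matrix plus adjacency matrix). $M_{n,m}^{s,t}$: bipartite graph with parts $X=X_1\cup X_2$, $Y=Y_1\cup Y_2$, $|X_1|=s$, $|X_2|=n-s$, $|Y_1|=m-t$, $|Y_2|=t$; edges are all pairs between $X_1$ and $Y_1$, between $X_2$ and $Y_1$, and between $X_2$ and $Y_2$. $N_{n,n}^{q',1}$ (here $q'=k-2$): parts $X=X_1\cup X_2\cup X_3$, $Y=Y_1\cup Y_2\cup Y_3$, $|X_1|=|Y_1|=n-q'-2$, $|X_2|=|Y_2|=q'+1$, $|X_3|=|Y_3|=1$; edges are all pairs between $X_i$ and $Y_i$ ($i=1,2,3$), between $X_1$ and $Y_2$, between $X_2$ and $Y_1\cup Y_3$, and between $X_3$ and $Y_2$. *)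

theory Defs
  imports "Jordan_Normal_Form.Char_Poly"
begin

text \<open>Simple graphs on the vertex set {0..<N}, given by a symmetric irreflexive
edge predicate.  For a bipartite graph with parts X and Y (|X| = n, |Y| = m)
we use vertices 0..<n for X and n..<n+m for Y.\<close>

definition adj_mat :: "nat \<Rightarrow> (nat \<Rightarrow> nat \<Rightarrow> bool) \<Rightarrow> real mat" where
  "adj_mat N E = mat N N (\<lambda>(i,j). if E i j then 1 else 0)"

definition deg_mat :: "nat \<Rightarrow> (nat \<Rightarrow> nat \<Rightarrow> bool) \<Rightarrow> real mat" where
  "deg_mat N E = mat N N (\<lambda>(i,j). if i = j then real (card {v. v < N \<and> E i v}) else 0)"

definition largest_eigenvalue :: "real mat \<Rightarrow> real" where
  "largest_eigenvalue A = Max {x. eigenvalue A x}"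

definition rho :: "nat \<Rightarrow> (nat \<Rightarrow> nat \<Rightarrow> bool) \<Rightarrow> real" where
  "rho N E = largest_eigenvalue (adj_mat N E)"

definition qsl :: "nat \<Rightarrow> (nat \<Rightarrow> nat \<Rightarrow> bool) \<Rightarrow> real" where
  "qsl N E = largest_eigenvalue (deg_mat N E + adj_mat N E)"

definition sym_bip :: "(nat \<Rightarrow> nat \<Rightarrow> bool) \<Rightarrow> nat \<Rightarrow> nat \<Rightarrow> bool" where
  "sym_bip R u v = (R u v \<or> R v u)"

text \<open>M_{n,m}^{s,t}: X1 = {0..<s}, X2 = {s..<n}, Y1 = {n..<n+(m-t)},
Y2 = {n+(m-t)..<n+m}; edges X1-Y1, X2-Y1, X2-Y2.\<close>
definition M_rel :: "nat \<Rightarrow> nat \<Rightarrow> nat \<Rightarrow> nat \<Rightarrow> nat \<Rightarrow> nat \<Rightarrow> bool" where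
  "M_rel n m s t x y =
     (x < n \<and> n \<le> y \<and> y < n + m \<and>
      ((x < s \<and> y < n + (m - t)) \<or>
       (s \<le> x \<and> y < n + (m - t)) \<or>
       (s \<le> x \<and> n + (m - t) \<le> y)))"

definition M_graph :: "nat \<Rightarrow> nat \<Rightarrow> nat \<Rightarrow> nat \<Rightarrow> nat \<Rightarrow> nat \<Rightarrow> bool" where
  "M_graph n m s t = sym_bip (M_rel n m s t)"

text \<open>N_{n,n}^{q,1}: blocks of sizes n-q-2, q+1, 1 on each side.
Block index of an X-vertex x (0 \<le> x < n) and of a Y-vertex y (n \<le> y < 2n).\<close>
definition N_block :: "nat \<Rightarrow> nat \<Rightarrow> nat \<Rightarrow> nat" where
  "N_block n q i = (if i < n - q - 2 then 1 else if i < n - 1 then 2 else 3)"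

definition N_rel :: "nat \<Rightarrow> nat \<Rightarrow> nat \<Rightarrow> nat \<Rightarrow> bool" where
  "N_rel n q x y =
     (x < n \<and> n \<le> y \<and> y < n + n \<and>
      (N_block n q x, N_block n q (y - n)) \<in>
        {(1,1), (2,2), (3,3), (1,2), (2,1), (2,3), (3,2)})"

definition N_graph :: "nat \<Rightarrow> nat \<Rightarrow> nat \<Rightarrow> nat \<Rightarrow> bool" where
  "N_graph n q = sym_bip (N_rel n q)"

end

theory Submission
  imports Defs
begin


lemma grouped_sum:
  fixes h :: "nat \<Rightarrow> 'a::comm_semiring_1" and b :: "nat \<Rightarrow> nat" and N :: nat
  assumes "\<forall>j<N. b j < B"
  shows "(\<Sum>j<N. h (b j)) = (\<Sum>\<beta><B. of_nat (card {j. j<N \<and> b j = \<beta>}) * h \<beta>)"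
proof -
  have "(\<Sum>j<N. h (b j)) = (\<Sum>\<beta><B. \<Sum>j\<in>{x. x \<in> {..<N} \<and> b x = \<beta>}. h (b j))"
    by (rule sum.group[symmetric]) (use assms in auto)
  also have "\<dots> = (\<Sum>\<beta><B. \<Sum>j\<in>{x. x \<in> {..<N} \<and> b x = \<beta>}. h \<beta>)"
    by (intro sum.cong) auto
  also have "\<dots> = (\<Sum>\<beta><B. of_nat (card {j. j<N \<and> b j = \<beta>}) * h \<beta>)"
    by simp
  finally show ?thesis .
qed

lemma mv_adj:
  fixes b :: "nat \<Rightarrow> nat"
  assumes i: "i < N" and R: "\<forall>i j. i<N \<longrightarrow> j<N \<longrightarrow> E i j = R (b i) (b j)"
    and bB: "\<forall>j<N. b j < B"
  shows "(adj_mat N E *\<^sub>v vec N (\<lambda>j. f (b j))) $ i =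
     (\<Sum>\<beta><B. if R (b i) \<beta> then real (card {j. j<N \<and> b j = \<beta>}) * f \<beta> else 0)"
proof -
  have "(adj_mat N E *\<^sub>v vec N (\<lambda>j. f (b j))) $ i =
     (\<Sum>j\<in>{0..<N}. row (adj_mat N E) i $ j * vec N (\<lambda>j. f (b j)) $ j)"
    using i by (simp add: adj_mat_def scalar_prod_def)
  also have "\<dots> = (\<Sum>j<N. (if R (b i) (b j) then f (b j) else 0))"
    unfolding atLeast0LessThan
  proof (rule sum.cong[OF refl])
    fix j assume j: "j \<in> {..<N}"
    hence j': "j < N" by simp
    have "row (adj_mat N E) i $ j = (if E i j then 1 else 0)"
      using i j' by (simp add: adj_mat_def)
    moreover have "E i j = R (b i) (b j)" using R i j' by blast
    ultimately show "row (adj_mat N E) i $ j * vec N (\<lambda>j. f (b j)) $ j = (if R (b i) (b j) then f (b j) else 0)"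
      using j' by simp
  qed
  also have "\<dots> = (\<Sum>\<beta><B. real (card {j. j<N \<and> b j = \<beta>}) * (if R (b i) \<beta> then f \<beta> else 0))"
    by (rule grouped_sum[OF bB])
  also have "\<dots> = (\<Sum>\<beta><B. if R (b i) \<beta> then real (card {j. j<N \<and> b j = \<beta>}) * f \<beta> else 0)"
    by (intro sum.cong) auto
  finally show ?thesis .
qed

lemma deg_blk:
  fixes b :: "nat \<Rightarrow> nat"
  assumes i: "i < N" and R: "\<forall>i j. i<N \<longrightarrow> j<N \<longrightarrow> E i j = R (b i) (b j)"
    and bB: "\<forall>j<N. b j < B"
  shows "card {v. v < N \<and> E i v} = (\<Sum>\<beta><B. if R (b i) \<beta> then card {j. j<N \<and> b j = \<beta>} else 0)"
proof -
  have "{v. v < N \<and> E i v} = {v \<in> {..<N}. R (b i) (b v)}" using i R by auto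
  hence "card {v. v < N \<and> E i v} = (\<Sum>j<N. (if R (b i) (b j) then 1 else 0))"
  proof -
    assume h: "{v. v < N \<and> E i v} = {v \<in> {..<N}. R (b i) (b v)}"
    have "card {v \<in> {..<N}. R (b i) (b v)} = (\<Sum>v\<in>{v \<in> {..<N}. R (b i) (b v)}. 1)" by simp
    also have "\<dots> = (\<Sum>j<N. (if R (b i) (b j) then 1 else 0))" by (rule sum.inter_filter) simp
    finally show ?thesis using h by simp
  qed
  also have "\<dots> = (\<Sum>\<beta><B. of_nat (card {j. j<N \<and> b j = \<beta>}) * (if R (b i) \<beta> then 1 else 0))"
    by (rule grouped_sum[OF bB])
  also have "\<dots> = (\<Sum>\<beta><B. if R (b i) \<beta> then card {j. j<N \<and> b j = \<beta>} else 0)"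
    by (intro sum.cong) auto
  finally show ?thesis .
qed

lemma mv_Q:
  assumes i: "i < N" and v: "v \<in> carrier_vec N"
  shows "((deg_mat N E + adj_mat N E) *\<^sub>v v) $ i =
     real (card {u. u < N \<and> E i u}) * v $ i + (adj_mat N E *\<^sub>v v) $ i"
proof -
  have c1: "deg_mat N E \<in> carrier_mat N N" "adj_mat N E \<in> carrier_mat N N"
    by (auto simp: deg_mat_def adj_mat_def)
  have e: "(deg_mat N E + adj_mat N E) *\<^sub>v v = deg_mat N E *\<^sub>v v + adj_mat N E *\<^sub>v v"
    by (rule add_mult_distrib_mat_vec[OF c1 v])
  have d: "(deg_mat N E *\<^sub>v v) $ i = real (card {u. u < N \<and> E i u}) * v $ i"
  proof -
    have "(deg_mat N E *\<^sub>v v) $ i = (\<Sum>j\<in>{0..<N}. row (deg_mat N E) i $ j * v $ j)"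
      using i v by (simp add: deg_mat_def scalar_prod_def)
    also have "\<dots> = (\<Sum>j\<in>{0..<N}. if j = i then real (card {u. u < N \<and> E i u}) * v $ i else 0)"
    proof (rule sum.cong[OF refl])
      fix j assume "j \<in> {0..<N}"
      hence j: "j < N" by simp
      show "row (deg_mat N E) i $ j * v $ j = (if j = i then real (card {u. u < N \<and> E i u}) * v $ i else 0)"
        using i j by (simp add: deg_mat_def)
    qed
    also have "\<dots> = real (card {u. u < N \<and> E i u}) * v $ i"
      using i by (subst sum.delta) simp_all
    finally show ?thesis .
  qed
  have "(deg_mat N E *\<^sub>v v + adj_mat N E *\<^sub>v v) $ i = (deg_mat N E *\<^sub>v v) $ i + (adj_mat N E *\<^sub>v v) $ i"
    using i c1 by (intro index_add_vec(1)) simp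
  thus ?thesis using e d by simp
qed

lemma ev_finite:
  assumes A: "(A :: real mat) \<in> carrier_mat N N"
  shows "finite {x. eigenvalue A x}"
proof -
  have "coeff (char_poly A) N = 1" using degree_monic_char_poly[OF A] by blast
  hence "char_poly A \<noteq> 0" by auto
  hence "finite {x. poly (char_poly A) x = 0}" by (rule poly_roots_finite)
  moreover have "{x. eigenvalue A x} = {x. poly (char_poly A) x = 0}"
    using eigenvalue_root_char_poly[OF A] by blast
  ultimately show ?thesis by simp
qed

lemma le_largest:
  assumes A: "(A :: real mat) \<in> carrier_mat N N" and "eigenvalue A x"
  shows "x \<le> largest_eigenvalue A"
  unfolding largest_eigenvalue_def using ev_finite[OF A] assms(2) by (intro Max_ge) auto

lemma largest_le:
  assumes A: "(A :: real mat) \<in> carrier_mat N N" and "eigenvalue A x0"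
    and "\<And>x. eigenvalue A x \<Longrightarrow> x \<le> c"
  shows "largest_eigenvalue A \<le> c"
  unfolding largest_eigenvalue_def using ev_finite[OF A] assms(2,3) by (subst Max_le_iff) auto

lemma mv_sum:
  assumes A: "(A :: real mat) \<in> carrier_mat N N" and v: "v \<in> carrier_vec N" and i: "i < N"
  shows "(A *\<^sub>v v) $ i = (\<Sum>j<N. A $$ (i,j) * v $ j)"
proof -
  have "(A *\<^sub>v v) $ i = (\<Sum>j\<in>{0..<N}. row A i $ j * v $ j)"
    using A v i by (simp add: scalar_prod_def)
  also have "\<dots> = (\<Sum>j<N. A $$ (i,j) * v $ j)"
    unfolding atLeast0LessThan using A i by (intro sum.cong) auto
  finally show ?thesis .
qed

lemma collatz_upper:
  fixes A :: "real mat"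
  assumes A: "A \<in> carrier_mat N N" and nn: "\<forall>i<N. \<forall>j<N. A $$ (i,j) \<ge> 0"
  and w: "w \<in> carrier_vec N" and wpos: "\<forall>i<N. w $ i > 0"
  and Aw: "\<forall>i<N. (A *\<^sub>v w) $ i \<le> c * w $ i"
  and ev: "eigenvalue A l"
  shows "l \<le> c"
proof -
  obtain v where v: "v \<in> carrier_vec N" "v \<noteq> 0\<^sub>v N" "A *\<^sub>v v = l \<cdot>\<^sub>v v"
    using ev A unfolding eigenvalue_def eigenvector_def by auto
  have "\<exists>i<N. v $ i \<noteq> 0"
  proof (rule ccontr)
    assume "\<not> ?thesis"
    hence "v = 0\<^sub>v N" using v(1) by (intro eq_vecI) auto
    thus False using v(2) by simp
  qed
  then obtain i1 where i1: "i1 < N" "v $ i1 \<noteq> 0" by blast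
  define S where "S = (\<lambda>i. \<bar>v $ i\<bar> / w $ i) ` {..<N}"
  have fS: "finite S" "S \<noteq> {}" using i1 unfolding S_def by auto
  define r where "r = Max S"
  obtain i0 where i0: "i0 < N" "r = \<bar>v $ i0\<bar> / w $ i0"
    using Max_in[OF fS] unfolding r_def S_def by auto
  have rge: "\<And>j. j < N \<Longrightarrow> \<bar>v $ j\<bar> / w $ j \<le> r"
    unfolding r_def S_def using fS unfolding S_def by (intro Max_ge) auto
  have bnd: "\<And>j. j < N \<Longrightarrow> \<bar>v $ j\<bar> \<le> r * w $ j"
  proof -
    fix j assume j: "j < N"
    have "\<bar>v $ j\<bar> / w $ j \<le> r" by (rule rge[OF j])
    thus "\<bar>v $ j\<bar> \<le> r * w $ j" using wpos j by (simp add: divide_le_eq)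
  qed
  have "0 < \<bar>v $ i1\<bar> / w $ i1" using i1 wpos by auto
  hence rpos: "r > 0" using rge[OF i1(1)] by linarith
  have vi0: "\<bar>v $ i0\<bar> = r * w $ i0" using i0 wpos by auto
  have vi0pos: "\<bar>v $ i0\<bar> > 0" using vi0 rpos wpos i0 by auto
  have "l * v $ i0 = (A *\<^sub>v v) $ i0" using v(3) v(1) i0 by simp
  also have "\<dots> = (\<Sum>j<N. A $$ (i0,j) * v $ j)" by (rule mv_sum[OF A v(1) i0(1)])
  finally have eq: "l * v $ i0 = (\<Sum>j<N. A $$ (i0,j) * v $ j)" .
  have "\<bar>l\<bar> * \<bar>v $ i0\<bar> = \<bar>\<Sum>j<N. A $$ (i0,j) * v $ j\<bar>" using eq by (metis abs_mult)
  also have "\<dots> \<le> (\<Sum>j<N. \<bar>A $$ (i0,j) * v $ j\<bar>)" by (rule sum_abs)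
  also have "\<dots> \<le> (\<Sum>j<N. A $$ (i0,j) * (r * w $ j))"
  proof (rule sum_mono)
    fix j assume "j \<in> {..<N}"
    hence j: "j < N" by simp
    have "\<bar>A $$ (i0,j) * v $ j\<bar> = A $$ (i0,j) * \<bar>v $ j\<bar>" using nn i0 j by (simp add: abs_mult)
    also have "\<dots> \<le> A $$ (i0,j) * (r * w $ j)" using nn i0 j bnd[OF j] by (intro mult_left_mono) auto
    finally show "\<bar>A $$ (i0,j) * v $ j\<bar> \<le> A $$ (i0,j) * (r * w $ j)" .
  qed
  also have "\<dots> = r * (\<Sum>j<N. A $$ (i0,j) * w $ j)"
    by (simp add: sum_distrib_left mult_ac)
  also have "\<dots> = r * (A *\<^sub>v w) $ i0" using mv_sum[OF A w i0(1)] by simp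
  also have "\<dots> \<le> r * (c * w $ i0)" using Aw i0 rpos by (intro mult_left_mono) auto
  also have "\<dots> = c * \<bar>v $ i0\<bar>" using vi0 by simp
  finally have "\<bar>l\<bar> * \<bar>v $ i0\<bar> \<le> c * \<bar>v $ i0\<bar>" .
  hence "\<bar>l\<bar> \<le> c" using vi0pos by simp
  thus ?thesis by simp
qed




definition bM :: "nat \<Rightarrow> nat \<Rightarrow> nat \<Rightarrow> nat" where
  "bM n k j = (if j < n - k then 0 else if j < n then 1 else if j < 2*n-2 then 2 else if j < 2*n-1 then 3 else 4)"
definition RM :: "nat \<Rightarrow> nat \<Rightarrow> bool" where
  "RM x y = ((x,y) \<in> {(0,2),(1,2),(1,3),(1,4),(2,0),(2,1),(3,1),(4,1)})"

lemma M_blk: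
  assumes "2 \<le> k" "k < n"
  shows "\<forall>i j. i < 2*n \<longrightarrow> j < 2*n \<longrightarrow> M_graph n n (n-k) 2 i j = RM (bM n k i) (bM n k j)"
  using assms unfolding M_graph_def sym_bip_def M_rel_def bM_def RM_def by auto

lemma bM_lt: "\<forall>j<2*n. bM n k j < 5" by (auto simp: bM_def)

lemma cntM:
  assumes "2 \<le> k" "k < n"
  shows "card {j. j<2*n \<and> bM n k j = 0} = n - k"
    "card {j. j<2*n \<and> bM n k j = 1} = k"
    "card {j. j<2*n \<and> bM n k j = 2} = n - 2"
    "card {j. j<2*n \<and> bM n k j = 3} = 1"
    "card {j. j<2*n \<and> bM n k j = 4} = 1"
proof -
  have "{j. j<2*n \<and> bM n k j = 0} = {..<n-k}" using assms by (auto simp: bM_def)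
  thus "card {j. j<2*n \<and> bM n k j = 0} = n - k" by simp
  have "{j. j<2*n \<and> bM n k j = 1} = {n-k..<n}" using assms by (auto simp: bM_def)
  thus "card {j. j<2*n \<and> bM n k j = 1} = k" using assms by simp
  have "{j. j<2*n \<and> bM n k j = 2} = {n..<2*n-2}" using assms by (auto simp: bM_def)
  thus "card {j. j<2*n \<and> bM n k j = 2} = n - 2" using assms by simp
  have "{j. j<2*n \<and> bM n k j = 3} = {2*n-2..<2*n-1}" using assms by (auto simp: bM_def)
  thus "card {j. j<2*n \<and> bM n k j = 3} = 1" using assms by simp
  have "{j. j<2*n \<and> bM n k j = 4} = {2*n-1..<2*n}" using assms by (auto simp: bM_def)
  thus "card {j. j<2*n \<and> bM n k j = 4} = 1" using assms by simp
qed

definition bN :: "nat \<Rightarrow> nat \<Rightarrow> nat \<Rightarrow> nat" where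
  "bN n k j = (if j < n - k then 0 else if j < n - 1 then 1 else if j < n then 2
     else if j < 2*n-k then 3 else if j < 2*n-1 then 4 else 5)"
definition RN :: "nat \<Rightarrow> nat \<Rightarrow> bool" where
  "RN x y = ((x,y) \<in> {(0,3),(1,4),(2,5),(0,4),(1,3),(1,5),(2,4),(3,0),(4,1),(5,2),(4,0),(3,1),(5,1),(4,2)})"

lemma NbX: "2 \<le> k \<Longrightarrow> k < n \<Longrightarrow> i < n \<Longrightarrow> N_block n (k-2) i = bN n k i + 1"
  by (auto simp: N_block_def bN_def)

lemma NbY: "2 \<le> k \<Longrightarrow> k < n \<Longrightarrow> n \<le> y \<Longrightarrow> y < 2*n \<Longrightarrow> N_block n (k-2) (y-n) = bN n k y - 2"
  by (auto simp: N_block_def bN_def)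

lemma bNX: "i < n \<Longrightarrow> bN n k i = 0 \<or> bN n k i = 1 \<or> bN n k i = 2"
  by (auto simp: bN_def)
lemma bNY: "n \<le> i \<Longrightarrow> bN n k i = 3 \<or> bN n k i = 4 \<or> bN n k i = 5"
  by (auto simp: bN_def)

lemma Nrel_blk:
  assumes "2 \<le> k" "k < n" "i < 2*n" "j < 2*n"
  shows "N_rel n (k-2) i j \<longleftrightarrow> (i < n \<and> n \<le> j \<and>
     (bN n k i, bN n k j) \<in> {(0,3),(1,4),(2,5),(0,4),(1,3),(1,5),(2,4)})"
proof (cases "i < n \<and> n \<le> j")
  case True
  have j2: "j < n + n" using assms by simp
  have e: "N_rel n (k-2) i j \<longleftrightarrow> (bN n k i + 1, bN n k j - 2) \<in> {(1,1), (2,2), (3,3), (1,2), (2,1), (2,3), (3,2)}"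
    unfolding N_rel_def using True j2 NbX[OF assms(1,2), of i] NbY[OF assms(1,2), of j] assms(4)
    by simp
  have X: "bN n k i = 0 \<or> bN n k i = 1 \<or> bN n k i = 2" using bNX True by blast
  have Y: "bN n k j = 3 \<or> bN n k j = 4 \<or> bN n k j = 5" using bNY True by blast
  show ?thesis unfolding e using True X Y by (elim disjE) simp_all
next
  case False
  thus ?thesis unfolding N_rel_def by blast
qed

lemma N_blk:
  assumes "2 \<le> k" "k < n"
  shows "\<forall>i j. i < 2*n \<longrightarrow> j < 2*n \<longrightarrow> N_graph n (k-2) i j = RN (bN n k i) (bN n k j)"
proof (intro allI impI)
  fix i j assume ij: "i < 2*n" "j < 2*n"
  have X: "i < n \<Longrightarrow> bN n k i = 0 \<or> bN n k i = 1 \<or> bN n k i = 2" "\<not> i < n \<Longrightarrow> bN n k i = 3 \<or> bN n k i = 4 \<or> bN n k i = 5"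
     "j < n \<Longrightarrow> bN n k j = 0 \<or> bN n k j = 1 \<or> bN n k j = 2" "\<not> j < n \<Longrightarrow> bN n k j = 3 \<or> bN n k j = 4 \<or> bN n k j = 5"
    using bNX bNY by (auto simp del: bN_def)
  show "N_graph n (k-2) i j = RN (bN n k i) (bN n k j)"
  proof (cases "i < n")
    case True
    note Xi = X(1)[OF True]
    show ?thesis
    proof (cases "j < n")
      case True
      note Xj = X(3)[OF True]
      show ?thesis unfolding N_graph_def sym_bip_def Nrel_blk[OF assms ij] Nrel_blk[OF assms ij(2,1)] RN_def using \<open>i < n\<close> True Xi Xj by (elim disjE) simp_all
    next
      case False
      note Xj = X(4)[OF False]
      show ?thesis unfolding N_graph_def sym_bip_def Nrel_blk[OF assms ij] Nrel_blk[OF assms ij(2,1)] RN_def using \<open>i < n\<close> False Xi Xj by (elim disjE) simp_all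
    qed
  next
    case False
    note Xi = X(2)[OF False]
    show ?thesis
    proof (cases "j < n")
      case True
      note Xj = X(3)[OF True]
      show ?thesis unfolding N_graph_def sym_bip_def Nrel_blk[OF assms ij] Nrel_blk[OF assms ij(2,1)] RN_def using \<open>\<not> i < n\<close> True Xi Xj by (elim disjE) simp_all
    next
      case False
      note Xj = X(4)[OF False]
      show ?thesis unfolding N_graph_def sym_bip_def Nrel_blk[OF assms ij] Nrel_blk[OF assms ij(2,1)] RN_def using \<open>\<not> i < n\<close> False Xi Xj by (elim disjE) simp_all
    qed
  qed
qed

lemma bN_lt: "\<forall>j<2*n. bN n k j < 6" by (auto simp: bN_def)

lemma cntN:
  assumes "2 \<le> k" "k < n"
  shows "card {j. j<2*n \<and> bN n k j = 0} = n - k"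
    "card {j. j<2*n \<and> bN n k j = 1} = k - 1"
    "card {j. j<2*n \<and> bN n k j = 2} = 1"
    "card {j. j<2*n \<and> bN n k j = 3} = n - k"
    "card {j. j<2*n \<and> bN n k j = 4} = k - 1"
    "card {j. j<2*n \<and> bN n k j = 5} = 1"
proof -
  have "{j. j<2*n \<and> bN n k j = 0} = {..<n-k}" using assms by (auto simp: bN_def)
  thus "card {j. j<2*n \<and> bN n k j = 0} = n - k" by simp
  have "{j. j<2*n \<and> bN n k j = 1} = {n-k..<n-1}" using assms by (auto simp: bN_def)
  thus "card {j. j<2*n \<and> bN n k j = 1} = k - 1" using assms by simp
  have "{j. j<2*n \<and> bN n k j = 2} = {n-1..<n}" using assms by (auto simp: bN_def)
  thus "card {j. j<2*n \<and> bN n k j = 2} = 1" using assms by simp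
  have "{j. j<2*n \<and> bN n k j = 3} = {n..<2*n-k}" using assms by (auto simp: bN_def)
  thus "card {j. j<2*n \<and> bN n k j = 3} = n - k" using assms by simp
  have "{j. j<2*n \<and> bN n k j = 4} = {2*n-k..<2*n-1}" using assms by (auto simp: bN_def)
  thus "card {j. j<2*n \<and> bN n k j = 4} = k - 1" using assms by simp
  have "{j. j<2*n \<and> bN n k j = 5} = {2*n-1..<2*n}" using assms by (auto simp: bN_def)
  thus "card {j. j<2*n \<and> bN n k j = 5} = 1" using assms by simp
qed




lemma sum5: "(\<Sum>\<beta><5::nat. f \<beta>) = f 0 + f 1 + f 2 + f 3 + f 4" by (simp add: eval_nat_numeral)
lemma sum6: "(\<Sum>\<beta><6::nat. f \<beta>) = f 0 + f 1 + f 2 + f 3 + f 4 + f 5" by (simp add: eval_nat_numeral)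

lemma adjM:
  assumes k: "2 \<le> k" "k < n" and i: "i < 2*n"
  shows "(adj_mat (2*n) (M_graph n n (n-k) 2) *\<^sub>v vec (2*n) (\<lambda>j. f (bM n k j))) $ i =
    (if bM n k i = 0 then real (n-2) * f 2
     else if bM n k i = 1 then real (n-2) * f 2 + f 3 + f 4
     else if bM n k i = 2 then real (n-k) * f 0 + real k * f 1
     else real k * f 1)"
proof -
  have bi: "bM n k i < 5" using bM_lt i by blast
  show ?thesis
    unfolding mv_adj[OF i M_blk[OF k] bM_lt] sum5 cntM[OF k]
    using bi by (auto simp: RM_def)
qed

lemma degM:
  assumes k: "2 \<le> k" "k < n" and i: "i < 2*n"
  shows "card {v. v < 2*n \<and> M_graph n n (n-k) 2 i v} =
    (if bM n k i = 0 then n-2 else if bM n k i = 1 then n else if bM n k i = 2 then n else k)"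
proof -
  have bi: "bM n k i < 5" using bM_lt i by blast
  show ?thesis
    unfolding deg_blk[OF i M_blk[OF k] bM_lt] sum5 cntM[OF k]
    using bi k by (auto simp: RM_def)
qed

lemma adjN:
  assumes k: "2 \<le> k" "k < n" and i: "i < 2*n"
  shows "(adj_mat (2*n) (N_graph n (k-2)) *\<^sub>v vec (2*n) (\<lambda>j. f (bN n k j))) $ i =
    (if bN n k i = 0 then real (n-k) * f 3 + real (k-1) * f 4
     else if bN n k i = 1 then real (n-k) * f 3 + real (k-1) * f 4 + f 5
     else if bN n k i = 2 then real (k-1) * f 4 + f 5
     else if bN n k i = 3 then real (n-k) * f 0 + real (k-1) * f 1
     else if bN n k i = 4 then real (n-k) * f 0 + real (k-1) * f 1 + f 2
     else real (k-1) * f 1 + f 2)"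
proof -
  have bi: "bN n k i < 6" using bN_lt i by blast
  show ?thesis
    unfolding mv_adj[OF i N_blk[OF k] bN_lt] sum6 cntN[OF k]
    using bi by (auto simp: RN_def)
qed

lemma degN:
  assumes k: "2 \<le> k" "k < n" and i: "i < 2*n"
  shows "card {v. v < 2*n \<and> N_graph n (k-2) i v} =
    (if bN n k i = 0 then n-1 else if bN n k i = 1 then n else if bN n k i = 2 then k
     else if bN n k i = 3 then n-1 else if bN n k i = 4 then n else k)"
proof -
  have bi: "bN n k i < 6" using bN_lt i by blast
  show ?thesis
    unfolding deg_blk[OF i N_blk[OF k] bN_lt] sum6 cntN[OF k]
    using bi k by (auto simp: RN_def)
qed




lemma root_between:
  fixes p :: "real \<Rightarrow> real"
  assumes "continuous_on {a..b} p" "p a < 0" "p b > 0" "a \<le> b"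
  shows "\<exists>x. a < x \<and> x < b \<and> p x = 0"
proof -
  obtain x where x: "a \<le> x" "x \<le> b" "p x = 0"
    using IVT'[of p a 0 b] assms by force
  have "x \<noteq> a" "x \<noteq> b" using x assms by auto
  thus ?thesis using x by force
qed

lemma eigI:
  assumes A: "(A :: real mat) \<in> carrier_mat N N" and v: "v \<in> carrier_vec N"
    and i: "i < N" "v $ i \<noteq> 0" and e: "\<forall>i<N. (A *\<^sub>v v) $ i = l * v $ i"
  shows "eigenvalue A l"
proof -
  have "A *\<^sub>v v = l \<cdot>\<^sub>v v" using A v e by (intro eq_vecI) auto
  moreover have "v \<noteq> 0\<^sub>v N" using i by auto
  ultimately show ?thesis unfolding eigenvalue_def eigenvector_def using A v by auto
qed

lemma part1:
  assumes k: "2 \<le> k" and n: "2*k^2+3 \<le> n"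
  shows "rho (2*n) (N_graph n (k-2)) > rho (2*n) (M_graph n n (n-k) 2)"
proof -
  have "k \<le> k^2" using k by (simp add: power2_eq_square)
  hence kn: "k < n" using n by linarith
  have k2: "2 \<le> k" "k < n" using k kn by auto
  have n3: "3 \<le> n" using kn k by linarith
  have rk: "real k \<ge> 2" using k by simp
  have rn: "real n \<ge> 2 * real k ^ 2 + 3"
  proof -
    have "real (2*k^2+3) \<le> real n" using n by (simp only: of_nat_le_iff)
    thus ?thesis by simp
  qed
  have rkn: "real k + 1 \<le> real n" using kn by simp
  have cv: "real (n-k) = real n - real k" "real (n-2) = real n - 2" "real (k-1) = real k - 1"
    using kn k n3 by (simp_all add: of_nat_diff)
  define t where "t = real n - 1"
  define AM where "AM = adj_mat (2*n) (M_graph n n (n-k) 2)"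
  define AN where "AN = adj_mat (2*n) (N_graph n (k-2))"
  have cM: "AM \<in> carrier_mat (2*n) (2*n)" by (simp add: AM_def adj_mat_def)
  have cN: "AN \<in> carrier_mat (2*n) (2*n)" by (simp add: AN_def adj_mat_def)
  define D where "D = real k * real n - 2 * real k + 1"
  define fM where "fM = (\<lambda>\<beta>::nat. if \<beta> = 0 then t * (real n - 2) * real k else if \<beta> = 1 then t * D
     else if \<beta> = 2 then (real n - real k) * (real n - 2) * real k + real k * D else real k * D)"
  define w where "w = vec (2*n) (\<lambda>j. fM (bM n k j))"
  have tpos: "t > 0" using n3 unfolding t_def by simp
  have Dpos: "D > 0"
  proof -
    have "real k * real n \<ge> real k * 3" using n3 rk by (intro mult_left_mono) auto
    thus ?thesis unfolding D_def by linarith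
  qed
  have fMpos: "\<And>\<beta>. fM \<beta> > 0"
    unfolding fM_def using tpos Dpos rk rkn n3 by (auto intro!: mult_pos_pos add_pos_pos)
  have G: "t*t*D - ((real n - 2) * ((real n - real k) * (real n - 2) * real k + real k * D) + real k * D + real k * D)
     = real n * (real n - 2 - 2 * real k ^ 2) + 4 * real k ^ 2 - 2 * real k + 1"
    unfolding t_def D_def by (simp add: algebra_simps power2_eq_square)
  have Gpos: "real n * (real n - 2 - 2 * real k ^ 2) + 4 * real k ^ 2 - 2 * real k + 1 > 0"
  proof -
    have "real n * (real n - 2 - 2 * real k ^ 2) \<ge> 0" using rn by (intro mult_nonneg_nonneg) auto
    moreover have "4 * real k ^ 2 - 2 * real k + 1 > 0"
    proof -
      have "real k ^ 2 \<ge> real k" using rk by (simp add: power2_eq_square)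
      thus ?thesis using rk by linarith
    qed
    ultimately show ?thesis by linarith
  qed
  have AMw: "\<forall>i<2*n. (AM *\<^sub>v w) $ i \<le> t * w $ i"
  proof (intro allI impI)
    fix i assume i: "i < 2*n"
    have wi: "w $ i = fM (bM n k i)" using i by (simp add: w_def)
    have bi: "bM n k i < 5" using bM_lt i by blast
    have e: "(AM *\<^sub>v w) $ i = (if bM n k i = 0 then real (n-2) * fM 2
     else if bM n k i = 1 then real (n-2) * fM 2 + fM 3 + fM 4
     else if bM n k i = 2 then real (n-k) * fM 0 + real k * fM 1
     else real k * fM 1)" unfolding AM_def w_def by (rule adjM[OF k2 i])
    consider "bM n k i = 0" | "bM n k i = 1" | "bM n k i = 2" | "bM n k i = 3" | "bM n k i = 4"
      using bi by linarith
    thus "(AM *\<^sub>v w) $ i \<le> t * w $ i"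
    proof cases
      case 1
      have "(AM *\<^sub>v w) $ i = real (n-2) * fM 2" using e 1 by simp
      also have "\<dots> = (real n - 2) * ((real n - real k) * (real n - 2) * real k + real k * D)"
        by (simp add: cv fM_def)
      also have "\<dots> = t * (t * (real n - 2) * real k)"
        unfolding t_def D_def by (simp add: algebra_simps)
      also have "\<dots> = t * w $ i" by (simp add: wi 1 fM_def)
      finally show ?thesis by simp
    next
      case 2
      have "(AM *\<^sub>v w) $ i = real (n-2) * fM 2 + fM 3 + fM 4" using e 2 by simp
      also have "\<dots> = (real n - 2) * ((real n - real k) * (real n - 2) * real k + real k * D) + real k * D + real k * D"
        by (simp add: cv fM_def)
      also have "\<dots> \<le> t * (t * D)" using G Gpos by simp
      also have "\<dots> = t * w $ i" by (simp add: wi 2 fM_def)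
      finally show ?thesis .
    next
      case 3
      have "(AM *\<^sub>v w) $ i = real (n-k) * fM 0 + real k * fM 1" using e 3 by simp
      also have "\<dots> = (real n - real k) * (t * (real n - 2) * real k) + real k * (t * D)"
        by (simp add: cv fM_def)
      also have "\<dots> = t * ((real n - real k) * (real n - 2) * real k + real k * D)"
        by (simp add: algebra_simps)
      also have "\<dots> = t * w $ i" by (simp add: wi 3 fM_def)
      finally show ?thesis by simp
    next
      case 4
      have "(AM *\<^sub>v w) $ i = real k * fM 1" using e 4 by simp
      also have "\<dots> = t * w $ i" by (simp add: wi 4 fM_def)
      finally show ?thesis by simp
    next
      case 5
      have "(AM *\<^sub>v w) $ i = real k * fM 1" using e 5 by simp
      also have "\<dots> = t * w $ i" by (simp add: wi 5 fM_def)
      finally show ?thesis by simp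
    qed
  qed
  have nnM: "\<forall>i<2*n. \<forall>j<2*n. AM $$ (i,j) \<ge> 0" by (simp add: AM_def adj_mat_def)
  have wc: "w \<in> carrier_vec (2*n)" by (simp add: w_def)
  have wpos: "\<forall>i<2*n. w $ i > 0" using fMpos by (simp add: w_def)
  define g where "g = (\<lambda>\<beta>::nat. if \<beta> = 3 then 1 else if \<beta> = 4 then -1 else (0::real))"
  have ev0: "eigenvalue AM 0"
  proof (rule eigI[OF cM, of "vec (2*n) (\<lambda>j. g (bM n k j))" "2*n-2"])
    show "vec (2*n) (\<lambda>j. g (bM n k j)) \<in> carrier_vec (2*n)" by simp
    show "2*n-2 < 2*n" using n3 by simp
    have "bM n k (2*n-2) = 3" unfolding bM_def using n3 kn by presburger
    thus "vec (2*n) (\<lambda>j. g (bM n k j)) $ (2*n-2) \<noteq> 0" using n3 by (simp add: g_def)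
    show "\<forall>i<2*n. (AM *\<^sub>v vec (2*n) (\<lambda>j. g (bM n k j))) $ i = 0 * vec (2*n) (\<lambda>j. g (bM n k j)) $ i"
    proof (intro allI impI)
      fix i assume i: "i < 2*n"
      show "(AM *\<^sub>v vec (2*n) (\<lambda>j. g (bM n k j))) $ i = 0 * vec (2*n) (\<lambda>j. g (bM n k j)) $ i"
        unfolding AM_def adjM[OF k2 i] by (simp add: g_def)
    qed
  qed
  have rhoM: "rho (2*n) (M_graph n n (n-k) 2) \<le> t"
    unfolding rho_def AM_def[symmetric]
    by (rule largest_le[OF cM ev0]) (rule collatz_upper[OF cM nnM wc wpos AMw])
  define a where "a = real n - real k"
  define b where "b = real k - 1"
  define pB where "pB = (\<lambda>l::real. (l-b)*(l-a)*(l-1) - a*b*(l-1) - b*(l-a))"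
  have pBt: "pB t < 0"
  proof -
    have "pB t = - b * b" unfolding pB_def a_def b_def t_def by (simp add: algebra_simps)
    moreover have "b > 0" unfolding b_def using rk by simp
    ultimately show ?thesis by simp
  qed
  have pBn: "pB (real n) > 0"
  proof -
    have "pB (real n) = (real n - real k) * (real n + real k - 1)"
      unfolding pB_def a_def b_def by (simp add: algebra_simps)
    moreover have "(real n - real k) * (real n + real k - 1) > 0" using rkn rk by (intro mult_pos_pos) auto
    ultimately show ?thesis by simp
  qed
  have "continuous_on {t..real n} pB" unfolding pB_def by (intro continuous_intros)
  then obtain l where l: "t < l" "l < real n" "pB l = 0"
    using root_between[of t "real n" pB] pBt pBn unfolding t_def by auto
  define h where "h = (\<lambda>\<beta>::nat. if \<beta> = 0 \<or> \<beta> = 3 then b*(l-1) else if \<beta> = 1 \<or> \<beta> = 4 then (l-a)*(l-1) else b*(l-a))"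
  have la: "l - a > 0" "l - 1 > 0" using l rk n3 unfolding a_def t_def by auto
  have evN: "eigenvalue AN l"
  proof (rule eigI[OF cN, of "vec (2*n) (\<lambda>j. h (bN n k j))" "n-k"])
    show "vec (2*n) (\<lambda>j. h (bN n k j)) \<in> carrier_vec (2*n)" by simp
    show "n-k < 2*n" using kn by simp
    have "bN n k (n-k) = 1" using k kn by (simp add: bN_def)
    thus "vec (2*n) (\<lambda>j. h (bN n k j)) $ (n-k) \<noteq> 0" using la kn by (simp add: h_def)
    show "\<forall>i<2*n. (AN *\<^sub>v vec (2*n) (\<lambda>j. h (bN n k j))) $ i = l * vec (2*n) (\<lambda>j. h (bN n k j)) $ i"
    proof (intro allI impI)
      fix i assume i: "i < 2*n"
      have bi: "bN n k i < 6" using bN_lt i by blast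
      have pl: "(l-b)*(l-a)*(l-1) - a*b*(l-1) - b*(l-a) = 0" using l(3) unfolding pB_def by simp
      have e1: "a * (b*(l-1)) + b * ((l-a)*(l-1)) = l * (b*(l-1))" by (simp add: algebra_simps)
      have e2: "a * (b*(l-1)) + b * ((l-a)*(l-1)) + b*(l-a) = l * ((l-a)*(l-1))"
        using pl by (simp add: algebra_simps)
      have e3: "b * ((l-a)*(l-1)) + b*(l-a) = l * (b*(l-a))" by (simp add: algebra_simps)
      have cv2: "real (n-k) = a" "real (k-1) = b" "real (k - Suc 0) = b" using cv unfolding a_def b_def by auto
      show "(AN *\<^sub>v vec (2*n) (\<lambda>j. h (bN n k j))) $ i = l * vec (2*n) (\<lambda>j. h (bN n k j)) $ i"
        unfolding AN_def adjN[OF k2 i] using i bi e1 e2 e3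
        by (auto simp: h_def cv2)
    qed
  qed
  have "l \<le> rho (2*n) (N_graph n (k-2))"
    unfolding rho_def AN_def[symmetric] by (rule le_largest[OF cN evN])
  thus ?thesis using rhoM l by linarith
qed




lemma QM_idx:
  assumes k: "2 \<le> k" "k < n" and i: "i < 2*n"
  shows "((deg_mat (2*n) (M_graph n n (n-k) 2) + adj_mat (2*n) (M_graph n n (n-k) 2)) *\<^sub>v vec (2*n) (\<lambda>j. f (bM n k j))) $ i =
    (if bM n k i = 0 then (real n - 2) * f 0 + (real n - 2) * f 2
     else if bM n k i = 1 then real n * f 1 + (real n - 2) * f 2 + f 3 + f 4
     else if bM n k i = 2 then real n * f 2 + (real n - real k) * f 0 + real k * f 1
     else real k * f (bM n k i) + real k * f 1)"
proof -
  have cv: "real (n-k) = real n - real k" "real (n-2) = real n - 2"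
    using k by (simp_all add: of_nat_diff)
  show ?thesis
    unfolding mv_Q[OF i vec_carrier] adjM[OF k i] degM[OF k i] using i cv by simp
qed

lemma QN_idx:
  assumes k: "2 \<le> k" "k < n" and i: "i < 2*n"
  shows "((deg_mat (2*n) (N_graph n (k-2)) + adj_mat (2*n) (N_graph n (k-2))) *\<^sub>v vec (2*n) (\<lambda>j. f (bN n k j))) $ i =
    (if bN n k i = 0 then (real n - 1) * f 0 + (real n - real k) * f 3 + (real k - 1) * f 4
     else if bN n k i = 1 then real n * f 1 + (real n - real k) * f 3 + (real k - 1) * f 4 + f 5
     else if bN n k i = 2 then real k * f 2 + (real k - 1) * f 4 + f 5
     else if bN n k i = 3 then (real n - 1) * f 3 + (real n - real k) * f 0 + (real k - 1) * f 1
     else if bN n k i = 4 then real n * f 4 + (real n - real k) * f 0 + (real k - 1) * f 1 + f 2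
     else real k * f 5 + (real k - 1) * f 1 + f 2)"
proof -
  have cv: "real (n-k) = real n - real k" "real (n-1) = real n - 1" "real (k-1) = real k - 1"
     "real (n - Suc 0) = real n - 1" "real (k - Suc 0) = real k - 1"
    using k by (simp_all add: of_nat_diff)
  have bi: "bN n k i < 6" using bN_lt i by blast
  have b6: "bN n k i = 0 \<or> bN n k i = 1 \<or> bN n k i = 2 \<or> bN n k i = 3 \<or> bN n k i = 4 \<or> bN n k i = 5"
    using bi by linarith
  show ?thesis
    unfolding mv_Q[OF i vec_carrier] adjN[OF k i] degN[OF k i] using i cv b6 by (elim disjE) simp_all
qed

lemma part2:
  assumes k: "2 \<le> k" and n: "k + 1 \<le> n"
  shows "qsl (2*n) (M_graph n n (n-k) 2) > qsl (2*n) (N_graph n (k-2))"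
proof -
  have k2: "2 \<le> k" "k < n" using k n by auto
  have n3: "3 \<le> n" using k n by linarith
  have rk: "real k \<ge> 2" using k by simp
  have rkn: "real k + 1 \<le> real n" using n by (metis of_nat_1 of_nat_add of_nat_le_iff)
  have rn: "real n \<ge> 3" using n3 by simp
  define QM where "QM = deg_mat (2*n) (M_graph n n (n-k) 2) + adj_mat (2*n) (M_graph n n (n-k) 2)"
  define QN where "QN = deg_mat (2*n) (N_graph n (k-2)) + adj_mat (2*n) (N_graph n (k-2))"
  have cM: "QM \<in> carrier_mat (2*n) (2*n)" by (simp add: QM_def adj_mat_def deg_mat_def)
  have cN: "QN \<in> carrier_mat (2*n) (2*n)" by (simp add: QN_def adj_mat_def deg_mat_def)
  have nnN: "\<forall>i<2*n. \<forall>j<2*n. QN $$ (i,j) \<ge> 0" by (simp add: QN_def adj_mat_def deg_mat_def)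
  define pN where "pN = (\<lambda>l::real. (l - real n - (real k - 1)) * (l - (real n - 1) - (real n - real k)) * (l - real k - 1)
     - (real n - real k) * (real k - 1) * (l - real k - 1) - (real k - 1) * (l - (real n - 1) - (real n - real k)))"
  have p1: "pN (2 * real n - 2) = - 2 * (real k - 1) * (real n - 2)"
    unfolding pN_def by (simp add: algebra_simps)
  have p1n: "pN (2 * real n - 2) < 0"
  proof -
    have "0 < 2 * (real k - 1) * (real n - 2)" using rk rn by (intro mult_pos_pos) auto
    moreover have "- 2 * (real k - 1) * (real n - 2) = - (2 * (real k - 1) * (real n - 2))" by (simp add: algebra_simps)
    ultimately show ?thesis unfolding p1 by linarith
  qed
  have p2: "pN (2 * real n) = 4 * real n * (real n - real k)"
    unfolding pN_def by (simp add: algebra_simps)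
  have p2p: "pN (2 * real n) > 0" unfolding p2 using rkn rn by (intro mult_pos_pos) auto
  have "continuous_on {2 * real n - 2 .. 2 * real n} pN" unfolding pN_def by (intro continuous_intros)
  then obtain l where l: "2 * real n - 2 < l" "l < 2 * real n" "pN l = 0"
    using root_between[of "2 * real n - 2" "2 * real n" pN] p1n p2p by auto
  define x1 where "x1 = (real k - 1) * (l - real k - 1)"
  define x2 where "x2 = (l - (real n - 1) - (real n - real k)) * (l - real k - 1)"
  define x3 where "x3 = (real k - 1) * (l - (real n - 1) - (real n - real k))"
  define h where "h = (\<lambda>\<beta>::nat. if \<beta> = 0 \<or> \<beta> = 3 then x1 else if \<beta> = 1 \<or> \<beta> = 4 then x2 else x3)"
  have pos1: "l - (real n - 1) - (real n - real k) > 0" "l - real k - 1 > 0" "real k - 1 > 0"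
    using l rk rkn by auto
  have xpos: "x1 > 0" "x2 > 0" "x3 > 0" unfolding x1_def x2_def x3_def using pos1 by auto
  have e1: "(real n - 1) * x1 + (real n - real k) * x1 + (real k - 1) * x2 = l * x1"
    unfolding x1_def x2_def by (simp add: algebra_simps)
  have e2': "real n * x2 + (real n - real k) * x1 + (real k - 1) * x2 + x3 = l * x2 - pN l"
    unfolding x1_def x2_def x3_def pN_def by (simp add: algebra_simps)
  have e2: "real n * x2 + (real n - real k) * x1 + (real k - 1) * x2 + x3 = l * x2"
    using e2' l(3) by simp
  have e3: "real k * x3 + (real k - 1) * x2 + x3 = l * x3"
    unfolding x2_def x3_def by (simp add: algebra_simps)
  define w where "w = vec (2*n) (\<lambda>j. h (bN n k j))"
  have wc: "w \<in> carrier_vec (2*n)" by (simp add: w_def)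
  have QNw: "\<forall>i<2*n. (QN *\<^sub>v w) $ i = l * w $ i"
  proof (intro allI impI)
    fix i assume i: "i < 2*n"
    have bi: "bN n k i < 6" using bN_lt i by blast
    have b6: "bN n k i = 0 \<or> bN n k i = 1 \<or> bN n k i = 2 \<or> bN n k i = 3 \<or> bN n k i = 4 \<or> bN n k i = 5"
      using bi by linarith
    show "(QN *\<^sub>v w) $ i = l * w $ i"
      unfolding QN_def w_def QN_idx[OF k2 i] using i b6 e1 e2 e3
      by (elim disjE) (simp_all add: h_def algebra_simps)
  qed
  have wpos: "\<forall>i<2*n. w $ i > 0" using xpos by (simp add: w_def h_def)
  have evN: "eigenvalue QN l"
  proof (rule eigI[OF cN wc, of 0])
    show "0 < 2*n" using n3 by simp
    thus "w $ 0 \<noteq> 0" using wpos by (metis less_irrefl)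
  qed (use QNw in auto)
  have qN: "qsl (2*n) (N_graph n (k-2)) \<le> l"
    unfolding qsl_def QN_def[symmetric]
    by (rule largest_le[OF cN evN]) (rule collatz_upper[OF cN nnN wc wpos], use QNw in auto)
  define Af where "Af = (\<lambda>m::real. (m - real n) * (m - real k) - 2 * real k)"
  define pM where "pM = (\<lambda>m::real. (m - real n) * Af m * (m - real n + 2)
     - (real n - 2) * ((real n - real k) * Af m + real k * (m - real k) * (m - real n + 2)))"
  have pMid: "\<And>m. pM m = m * pN m + m * (m - real n) * (m - 2 * real n)"
    unfolding pM_def pN_def Af_def by (simp add: algebra_simps)
  have pMl: "pM l < 0"
  proof -
    have "l * (l - real n) * (l - 2 * real n) < 0"
      using l rn by (intro mult_pos_neg mult_pos_pos) auto
    thus ?thesis using pMid[of l] l(3) by simp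
  qed
  have pM3: "pM (3 * real n) = 6 * real n ^ 2 * (3 * real n ^ 2 - real n * real k + 6 * real n - 4 * real k)"
    unfolding pM_def Af_def by (simp add: algebra_simps power2_eq_square)
  have pM3p: "pM (3 * real n) > 0"
  proof -
    have c1: "real n * real k \<le> real n * real n" using rkn rn by (intro mult_left_mono) auto
    have c2: "real n * real n \<ge> 0" by simp
    have "3 * real n ^ 2 - real n * real k + 6 * real n - 4 * real k > 0"
      using c1 c2 rkn rn unfolding power2_eq_square by linarith
    thus ?thesis unfolding pM3 using rn by (intro mult_pos_pos) auto
  qed
  have "continuous_on {l .. 3 * real n} pM" unfolding pM_def Af_def by (intro continuous_intros)
  then obtain m where m: "l < m" "m < 3 * real n" "pM m = 0"
    using root_between[of l "3 * real n" pM] pMl pM3p l rn by auto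
  define y0 where "y0 = (real n - 2) * Af m"
  define y1 where "y1 = (real n - 2) * (m - real k) * (m - real n + 2)"
  define y2 where "y2 = Af m * (m - real n + 2)"
  define y3 where "y3 = real k * (real n - 2) * (m - real n + 2)"
  define g where "g = (\<lambda>\<beta>::nat. if \<beta> = 0 then y0 else if \<beta> = 1 then y1 else if \<beta> = 2 then y2 else y3)"
  have f0: "(real n - 2) * y0 + (real n - 2) * y2 = m * y0"
    unfolding y0_def y2_def by (simp add: algebra_simps)
  have f1: "real n * y1 + (real n - 2) * y2 + y3 + y3 = m * y1"
    unfolding y1_def y2_def y3_def Af_def by (simp add: algebra_simps)
  have f2': "real n * y2 + (real n - real k) * y0 + real k * y1 = m * y2 - pM m"
    unfolding y0_def y1_def y2_def pM_def by (simp add: algebra_simps)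
  have f2: "real n * y2 + (real n - real k) * y0 + real k * y1 = m * y2" using f2' m(3) by simp
  have f3: "real k * y3 + real k * y1 = m * y3"
    unfolding y1_def y3_def by (simp add: algebra_simps)
  define u where "u = vec (2*n) (\<lambda>j. g (bM n k j))"
  have uc: "u \<in> carrier_vec (2*n)" by (simp add: u_def)
  have y3nz: "y3 \<noteq> 0" unfolding y3_def using rk rn m l by auto
  have b4: "bM n k (2*n-1) = 4" unfolding bM_def using n3 k2 by presburger
  have evM: "eigenvalue QM m"
  proof (rule eigI[OF cM uc, of "2*n-1"])
    show "2*n-1 < 2*n" using n3 by simp
    show "u $ (2*n-1) \<noteq> 0" using b4 y3nz n3 by (simp add: u_def g_def)
    show "\<forall>i<2*n. (QM *\<^sub>v u) $ i = m * u $ i"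
    proof (intro allI impI)
      fix i assume i: "i < 2*n"
      have bi: "bM n k i < 5" using bM_lt i by blast
      have b5: "bM n k i = 0 \<or> bM n k i = 1 \<or> bM n k i = 2 \<or> bM n k i = 3 \<or> bM n k i = 4"
        using bi by linarith
      show "(QM *\<^sub>v u) $ i = m * u $ i"
        unfolding QM_def u_def QM_idx[OF k2 i] using i b5 f0 f1 f2 f3
        by (elim disjE) (simp_all add: g_def algebra_simps)
    qed
  qed
  have "m \<le> qsl (2*n) (M_graph n n (n-k) 2)"
    unfolding qsl_def QM_def[symmetric] by (rule le_largest[OF cM evM])
  thus ?thesis using qN m by linarith
qed


theorem lemma4p1:
  shows "(\<forall>k n :: nat. 2 \<le> k \<and> 2 * k^2 + 3 \<le> n \<longrightarrow>
            rho (2 * n) (N_graph n (k - 2)) > rho (2 * n) (M_graph n n (n - k) 2))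
       \<and> (\<forall>k n :: nat. 2 \<le> k \<and> k + 1 \<le> n \<longrightarrow>
            qsl (2 * n) (M_graph n n (n - k) 2) > qsl (2 * n) (N_graph n (k - 2)))"
  using part1 part2 by auto

end
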